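(* Let $r\ge1$ and $t\ge0$ be integers and $\alpha\in[\frac12,\frac23]$. Let $\boldsymbol{y}'=(\frac23,\ldots,\frac23,\alpha)\in\mathbb{R}^r$ (i.e. $y'_1=\cdots=y'_{r-1}=\frac23$, $y'_r=\alpha$) and $\boldsymbol{x}'=(\alpha,\ldots,\alpha)\in\mathbb{R}^t$, and let $R(\boldsymbol{y}',\boldsymbol{x}')=A(\boldsymbol{y}',\boldsymbol{x}')/B(\boldsymbol{y}',\boldsymbol{x}')$. If $\frac23(r-1)+\alpha\le(1-\alpha)t$, then \[ R(\boldsymbol{y}',\boldsymbol{x}')\le H_1(\alpha,r,t):=\frac{3(1-\alpha)\big(3\alpha(t+1)(2r+t)+2r(r-1)\big)}{3\alpha+4r^2+(6\alpha-2)r+9(1-\alpha)\alpha t(t+1)-2}. \] Otherwise (if $\frac23(r-1)+\alpha>(1-\alpha)t$), \[ R(\boldsymbol{y}',\boldsymbol{x}')\le H_2(\alpha,r,t):=\frac{6r(r-1)+9\alpha(t+1)(2r+t)}{\big(2r+3\alpha(t+1)-2\big)\big(2r+3\alpha(t+1)+1\big)}. \]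
   Context: For $\boldsymbol{y}\in\mathbb{R}^r_{>0}$ and $\boldsymbol{x}\in[0,1]^t$, set $x_i:=0$ for $i>t$ and define $A(\boldsymbol{y},\boldsymbol{x})=\sum_{i=1}^r i\,y_i+\sum_{i=1}^t (r+i)\,x_i$. Let $\ell\in\mathbb{N}$ be the unique index with $\sum_{i=1}^{\ell-1}(1-x_i)<\sum_{i=1}^r y_i\le\sum_{i=1}^{\ell}(1-x_i)$, and $\rho:=\sum_{i=1}^r y_i-\sum_{i=1}^{\ell-1}(1-x_i)\in(0,1-x_\ell]$. Define $B(\boldsymbol{y},\boldsymbol{x})=\frac12\ell(\ell-1)+(x_\ell+\rho)\ell+\sum_{i=\ell+1}^{t} i\,x_i$ (the last sum being $0$ if $\ell\ge t$). This is the cost of the "pseudo-packing" with weight $1$ in bins $1,\ldots,\ell-1$, weight $x_\ell+\rho$ in bin $\ell$ and weight $x_i$ in bins $i>\ell$. *)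

theory Defs
  imports Complex_Main
begin

text \<open>Vectors y in R^r and x in [0,1]^t are represented as functions nat => real,
  indexed from 1; only the entries y 1..y r and x 1..x t are used.
  xext t x i is x_i extended by x_i = 0 for i > t.\<close>

definition xext :: "nat \<Rightarrow> (nat \<Rightarrow> real) \<Rightarrow> nat \<Rightarrow> real" where
  "xext t x i = (if i \<le> t then x i else 0)"

definition Acost :: "nat \<Rightarrow> nat \<Rightarrow> (nat \<Rightarrow> real) \<Rightarrow> (nat \<Rightarrow> real) \<Rightarrow> real" where
  "Acost r t y x = (\<Sum>i=1..r. real i * y i) + (\<Sum>i=1..t. real (r + i) * x i)"

definition Spart :: "nat \<Rightarrow> (nat \<Rightarrow> real) \<Rightarrow> nat \<Rightarrow> real" where
  "Spart t x k = (\<Sum>i=1..k. 1 - xext t x i)"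

definition lidx :: "nat \<Rightarrow> nat \<Rightarrow> (nat \<Rightarrow> real) \<Rightarrow> (nat \<Rightarrow> real) \<Rightarrow> nat" where
  "lidx r t y x = (THE l. 1 \<le> l \<and> Spart t x (l - 1) < (\<Sum>i=1..r. y i)
                         \<and> (\<Sum>i=1..r. y i) \<le> Spart t x l)"

definition rho :: "nat \<Rightarrow> nat \<Rightarrow> (nat \<Rightarrow> real) \<Rightarrow> (nat \<Rightarrow> real) \<Rightarrow> real" where
  "rho r t y x = (\<Sum>i=1..r. y i) - Spart t x (lidx r t y x - 1)"

definition Bcost :: "nat \<Rightarrow> nat \<Rightarrow> (nat \<Rightarrow> real) \<Rightarrow> (nat \<Rightarrow> real) \<Rightarrow> real" where
  "Bcost r t y x = (let l = lidx r t y x in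
     real l * (real l - 1) / 2 + (xext t x l + rho r t y x) * real l
     + (\<Sum>i=l+1..t. real i * x i))"

definition Rratio :: "nat \<Rightarrow> nat \<Rightarrow> (nat \<Rightarrow> real) \<Rightarrow> (nat \<Rightarrow> real) \<Rightarrow> real" where
  "Rratio r t y x = Acost r t y x / Bcost r t y x"

definition H1 :: "real \<Rightarrow> nat \<Rightarrow> nat \<Rightarrow> real" where
  "H1 a r t = 3 * (1 - a) * (3 * a * (real t + 1) * (2 * real r + real t) + 2 * real r * (real r - 1))
     / (3 * a + 4 * (real r)^2 + (6 * a - 2) * real r + 9 * (1 - a) * a * real t * (real t + 1) - 2)"

definition H2 :: "real \<Rightarrow> nat \<Rightarrow> nat \<Rightarrow> real" where
  "H2 a r t = (6 * real r * (real r - 1) + 9 * a * (real t + 1) * (2 * real r + real t))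
     / ((2 * real r + 3 * a * (real t + 1) - 2) * (2 * real r + 3 * a * (real t + 1) + 1))"

end

theory Submission
  imports Defs
begin

lemma Spart_closed:
  "Spart t (\<lambda>i. a) k = (if k \<le> t then (1-a)*real k else (1-a)*real t + (real k - real t))"
proof (induction k)
  case 0
  then show ?case by (simp add: Spart_def)
next
  case (Suc k)
  have "Spart t (\<lambda>i. a) (Suc k) = Spart t (\<lambda>i. a) k + (1 - xext t (\<lambda>i. a) (Suc k))"
    by (simp add: Spart_def sum.cl_ivl_Suc)
  then show ?case using Suc by (auto simp: xext_def algebra_simps)
qed

lemma Spart_mono:
  assumes "a \<le> 1" "k \<le> m"
  shows "Spart t (\<lambda>i. a) k \<le> Spart t (\<lambda>i. a) m"
proof -
  have h1: "(1-a)*real k \<le> (1-a)*real m" using assms by (intro mult_left_mono) auto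
  have h2: "(1-a)*real k \<le> (1-a)*real t" if "k \<le> t" using assms that by (intro mult_left_mono) auto
  have h3: "(1-a)*real t \<le> (1-a)*real m" if "t \<le> m" using assms that by (intro mult_left_mono) auto
  show ?thesis using assms h1 h2 h3 by (auto simp: Spart_closed algebra_simps)
qed

lemma lidx_char:
  assumes "1 \<le> l" "Spart t x (l-1) < (\<Sum>i=1..r. y i)" "(\<Sum>i=1..r. y i) \<le> Spart t x l"
    and mono: "\<And>k m. k \<le> m \<Longrightarrow> Spart t x k \<le> Spart t x m"
  shows "lidx r t y x = l"
  unfolding lidx_def
proof (rule the_equality)
  show "1 \<le> l \<and> Spart t x (l - 1) < (\<Sum>i=1..r. y i) \<and> (\<Sum>i=1..r. y i) \<le> Spart t x l"
    using assms by auto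
next
  fix l' assume h: "1 \<le> l' \<and> Spart t x (l' - 1) < (\<Sum>i=1..r. y i) \<and> (\<Sum>i=1..r. y i) \<le> Spart t x l'"
  show "l' = l"
  proof (rule ccontr)
    assume "l' \<noteq> l"
    then consider "l' < l" | "l < l'" by linarith
    then show False
    proof cases
      case 1
      then have "Spart t x l' \<le> Spart t x (l-1)" using mono by simp
      then show False using h assms by linarith
    next
      case 2
      then have "Spart t x l \<le> Spart t x (l'-1)" using mono by simp
      then show False using h assms by linarith
    qed
  qed
qed

lemma gauss: "(\<Sum>i=1..n. real i) = real n * (real n + 1) / 2"
  by (induction n) (auto simp: sum.cl_ivl_Suc algebra_simps)

lemma gauss_tail:
  assumes "l \<le> t"
  shows "(\<Sum>i=l+1..t. real i) = (real t * (real t + 1) - real l * (real l + 1)) / 2"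
  using assms
proof (induction t rule: dec_induct)
  case base
  then show ?case by simp
next
  case (step n)
  then show ?case by (simp add: sum.cl_ivl_Suc algebra_simps)
qed

theorem claim3:
  fixes r t :: nat and \<alpha> :: real and y' x' :: "nat \<Rightarrow> real"
  assumes "r \<ge> 1"
    and "1/2 \<le> \<alpha>" and "\<alpha> \<le> 2/3"
    and "y' = (\<lambda>i. if i < r then 2/3 else \<alpha>)"
    and "x' = (\<lambda>i. \<alpha>)"
  shows "(2/3 * (real r - 1) + \<alpha> \<le> (1 - \<alpha>) * real t \<longrightarrow> Rratio r t y' x' \<le> H1 \<alpha> r t)
       \<and> (2/3 * (real r - 1) + \<alpha> > (1 - \<alpha>) * real t \<longrightarrow> Rratio r t y' x' \<le> H2 \<alpha> r t)"
proof -
  define c where "c = 1 - \<alpha>"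
  have c0: "c > 0" using assms(3) by (simp add: c_def)
  obtain m where rm: "r = Suc m" using assms(1) by (cases r) auto
  define S where "S = 2/3 * (real r - 1) + \<alpha>"
  have Sdef: "(\<Sum>i=1..r. y' i) = S"
  proof -
    have "(\<Sum>i=1..m. y' i) = (\<Sum>i=1..m. 2/3)"
      by (rule sum.cong) (auto simp: assms(4) rm)
    then show ?thesis by (simp add: rm sum.cl_ivl_Suc assms(4) S_def)
  qed
  have S0: "S > 0"
  proof -
    have "real r \<ge> 1" using assms(1) by simp
    then have "2/3 * (real r - 1) \<ge> 0" by simp
    then show ?thesis using assms(2) unfolding S_def by linarith
  qed
  define A where "A = Acost r t y' x'"
  have A6: "6 * A = 2 * real r * (real r - 1) + 3 * \<alpha> * (real t + 1) * (2 * real r + real t)"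
  proof -
    have "(\<Sum>i=1..m. real i * y' i) = (\<Sum>i=1..m. real i * (2/3))"
      by (rule sum.cong) (auto simp: assms(4) rm)
    also have "\<dots> = (\<Sum>i=1..m. real i) * (2/3)"
      by (rule sum_distrib_right[symmetric])
    also have "\<dots> = real m * (real m + 1) / 3"
      by (simp only: gauss)
    finally have s1: "(\<Sum>i=1..r. real i * y' i) = real m * (real m + 1) / 3 + real r * \<alpha>"
      by (simp add: rm sum.cl_ivl_Suc assms(4))
    have "(\<Sum>i=1..t. real (r + i) * x' i) = (\<Sum>i=1..t. real r * \<alpha> + real i * \<alpha>)"
      by (simp add: assms(5) algebra_simps)
    also have "\<dots> = (\<Sum>i=1..t. real r * \<alpha>) + (\<Sum>i=1..t. real i) * \<alpha>"
      by (simp add: sum.distrib sum_distrib_right)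
    also have "\<dots> = real t * real r * \<alpha> + \<alpha> * (real t * (real t + 1) / 2)"
      by (simp only: gauss) simp
    finally show ?thesis using s1 by (simp add: A_def Acost_def rm field_simps)
  qed
  have A6': "3 * \<alpha> * (real t + 1) * (2 * real r + real t) + 2 * real r * (real r - 1) = 6 * A"
    using A6 by linarith
  have A6'': "6 * real r * (real r - 1) + 9 * \<alpha> * (real t + 1) * (2 * real r + real t) = 3 * (6 * A)"
    using A6 by linarith
  have A0: "A \<ge> 0"
  proof -
    have "2 * real r * (real r - 1) \<ge> 0" using assms(1) by simp
    moreover have "3 * \<alpha> * (real t + 1) * (2 * real r + real t) \<ge> 0" using assms(2) by simp
    ultimately show ?thesis using A6 by linarith
  qed
  have mono: "\<And>k m. k \<le> m \<Longrightarrow> Spart t x' k \<le> Spart t x' m"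
    using Spart_mono assms(3,5) by simp
  have part1: "S \<le> c * real t \<longrightarrow> Rratio r t y' x' \<le> H1 \<alpha> r t"
  proof
    assume St: "S \<le> c * real t"
    define L where "L = nat \<lceil>S / c\<rceil>"
    have cz: "real_of_int \<lceil>S/c\<rceil> - 1 < S/c" "S/c \<le> real_of_int \<lceil>S/c\<rceil>"
      by linarith+
    have pos: "S / c > 0" using S0 c0 by simp
    have RL: "real L = real_of_int \<lceil>S/c\<rceil>" using pos unfolding L_def by simp
    have L1: "L \<ge> 1" using pos unfolding L_def by linarith
    have Lt: "L \<le> t"
    proof -
      have "S / c \<le> real t" using St c0 by (simp only: pos_divide_le_eq[OF c0]) (simp add: mult.commute)
      then have "\<lceil>S/c\<rceil> \<le> int t" by (simp add: ceiling_le_iff)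
      then show ?thesis unfolding L_def by (simp only: nat_le_iff)
    qed
    have Sc: "S = c * (S / c)" using c0 by simp
    have i1: "c * (real L - 1) < S"
      using mult_strict_left_mono[OF cz(1) c0] RL Sc by simp
    have i2: "S \<le> c * real L"
    proof -
      have "c * (S / c) \<le> c * real L" using mult_left_mono[OF cz(2), of c] c0 RL by simp
      then show ?thesis using Sc by linarith
    qed
    have sp1: "Spart t x' (L - 1) = c * (real L - 1)"
    proof -
      have "L - 1 \<le> t" using Lt by simp
      then show ?thesis using L1 by (simp add: assms(5) Spart_closed c_def of_nat_diff)
    qed
    have sp2: "Spart t x' L = c * real L"
      using Lt by (simp add: assms(5) Spart_closed c_def)
    have lid: "lidx r t y' x' = L"
      by (rule lidx_char) (use L1 i1 i2 sp1 sp2 Sdef mono in auto)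
    have rh: "rho r t y' x' = S - c * (real L - 1)"
      unfolding rho_def lid Sdef sp1 by simp
    have xs: "xext t x' L = \<alpha>" using Lt by (simp add: xext_def assms(5))
    have tail: "(\<Sum>i=L+1..t. real i * x' i) = \<alpha> * ((real t * (real t + 1) - real L * (real L + 1)) / 2)"
    proof -
      have "(\<Sum>i=L+1..t. real i * x' i) = (\<Sum>i=L+1..t. real i) * \<alpha>"
        by (simp add: assms(5) sum_distrib_right)
      then show ?thesis by (simp only: gauss_tail[OF Lt] mult.commute)
    qed
    define B where "B = Bcost r t y' x'"
    have Bv: "B = real L * (real L - 1) / 2 + (\<alpha> + (S - c * (real L - 1))) * real L
        + \<alpha> * ((real t * (real t + 1) - real L * (real L + 1)) / 2)"
      unfolding B_def Bcost_def Let_def lid rh xs tail by simp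
    define p where "p = c * real L - S"
    define q where "q = S - c * (real L - 1)"
    have pq: "p * q \<ge> 0" using i1 i2 by (simp add: p_def q_def)
    have key: "2 * c * B = S * (S + c) + p * q + c * \<alpha> * (real t * (real t + 1))"
      unfolding Bv p_def q_def c_def by (simp add: field_simps)
    define D where "D = 3 * \<alpha> + 4 * (real r)^2 + (6 * \<alpha> - 2) * real r + 9 * (1 - \<alpha>) * \<alpha> * real t * (real t + 1) - 2"
    have DS: "D = 9 * S * (S + c) + 9 * c * \<alpha> * (real t * (real t + 1))"
      unfolding D_def S_def c_def by (simp add: field_simps power2_eq_square)
    have D0: "D > 0"
    proof -
      have "S * (S + c) > 0" using S0 c0 by simp
      moreover have "c * \<alpha> * (real t * (real t + 1)) \<ge> 0" using c0 assms(2) by simp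
      ultimately show ?thesis using DS by linarith
    qed
    have DB: "D \<le> 18 * c * B" using key DS pq by linarith
    have B0: "B > 0"
    proof -
      have "c * B > 0" using DB D0 by linarith
      then show ?thesis using c0 by (simp add: zero_less_mult_iff)
    qed
    have H1v: "H1 \<alpha> r t = 3 * c * (6 * A) / D"
      unfolding H1_def D_def c_def A6' by (simp only:)
    have "A * D \<le> A * (18 * c * B)" by (rule mult_left_mono[OF DB A0])
    moreover have "3 * c * (6 * A) / D * B = (A * (18 * c * B)) / D"
      by (simp add: algebra_simps)
    ultimately have "A \<le> 3 * c * (6 * A) / D * B"
      by (simp only: pos_le_divide_eq[OF D0])
    then show "Rratio r t y' x' \<le> H1 \<alpha> r t"
      unfolding Rratio_def H1v A_def[symmetric] B_def[symmetric]
      by (simp only: pos_divide_le_eq[OF B0])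
  qed
  have part2: "S > c * real t \<longrightarrow> Rratio r t y' x' \<le> H2 \<alpha> r t"
  proof
    assume St: "S > c * real t"
    define v where "v = S + \<alpha> * real t"
    have vt: "v > real t" using St unfolding v_def c_def by (simp add: algebra_simps)
    define L where "L = nat \<lceil>v\<rceil>"
    have cz: "real_of_int \<lceil>v\<rceil> - 1 < v" "v \<le> real_of_int \<lceil>v\<rceil>"
      by linarith+
    have RL: "real L = real_of_int \<lceil>v\<rceil>" using vt unfolding L_def by simp
    have Lt: "L \<ge> t + 1"
    proof -
      have "\<lceil>v\<rceil> > int t" using vt by (simp add: less_ceiling_iff)
      then show ?thesis unfolding L_def by simp
    qed
    have i1: "real L - 1 < v" using cz RL by simp
    have i2: "v \<le> real L" using cz RL by simp
    have sp1: "Spart t x' (L - 1) = real L - 1 - \<alpha> * real t"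
    proof (cases "L - 1 \<le> t")
      case True
      then have "L = t + 1" using Lt by simp
      then show ?thesis by (simp add: assms(5) Spart_closed algebra_simps)
    next
      case False
      then show ?thesis using Lt by (simp add: assms(5) Spart_closed of_nat_diff algebra_simps)
    qed
    have sp2: "Spart t x' L = real L - \<alpha> * real t"
      using Lt by (simp add: assms(5) Spart_closed algebra_simps)
    have lid: "lidx r t y' x' = L"
      by (rule lidx_char) (use Lt i1 i2 sp1 sp2 Sdef mono v_def in auto)
    have rh: "rho r t y' x' = v - (real L - 1)"
      unfolding rho_def lid Sdef sp1 v_def by simp
    have xs: "xext t x' L = 0" using Lt by (simp add: xext_def)
    have tail: "(\<Sum>i=L+1..t. real i * x' i) = 0" using Lt by simp
    define B where "B = Bcost r t y' x'"
    have Bv: "B = real L * (real L - 1) / 2 + (v - (real L - 1)) * real L"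
      unfolding B_def Bcost_def Let_def lid rh xs tail by simp
    define p where "p = real L - v"
    define q where "q = v - (real L - 1)"
    have pq: "p * q \<ge> 0" using i1 i2 by (simp add: p_def q_def)
    have key: "2 * B = v * (v + 1) + p * q"
      unfolding Bv p_def q_def by (simp add: field_simps)
    define D where "D = (2 * real r + 3 * \<alpha> * (real t + 1) - 2) * (2 * real r + 3 * \<alpha> * (real t + 1) + 1)"
    have DS: "D = 9 * v * (v + 1)"
      unfolding D_def v_def S_def by (simp add: field_simps)
    have D0: "D > 0" using DS vt by simp
    have DB: "D \<le> 18 * B" using key DS pq by linarith
    have B0: "B > 0" using DB D0 by linarith
    have H2v: "H2 \<alpha> r t = 3 * (6 * A) / D"
      unfolding H2_def D_def A6'' by (simp only:)
    have "A * D \<le> A * (18 * B)" by (rule mult_left_mono[OF DB A0])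
    moreover have "3 * (6 * A) / D * B = (A * (18 * B)) / D"
      by (simp add: algebra_simps)
    ultimately have "A \<le> 3 * (6 * A) / D * B"
      by (simp only: pos_le_divide_eq[OF D0])
    then show "Rratio r t y' x' \<le> H2 \<alpha> r t"
      unfolding Rratio_def H2v A_def[symmetric] B_def[symmetric]
      by (simp only: pos_divide_le_eq[OF B0])
  qed
  show ?thesis using part1 part2 unfolding S_def c_def by blast
qed

end
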